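(* Let $D_L$ be an oriented link diagram in $S^2$ in which every component passes through at least one crossing, and let $\Gamma_M$ be the perfect matching graph obtained by flattening all crossings of $D_L$ (the closed web associated to $D_L$), representing the planar trivalent graph $G$ with perfect matching $M$. Then $(G,M)\in\mathscr G$; that is, no perfect matching graph representing $(G,M)$ has a bad face in its hypercube of states.
   Context: Flattening a crossing of an oriented link diagram: in a small disk around the crossing, whose boundary meets the diagram in two incoming ends $p,q$ and two outgoing ends $r,s$, replace the crossing by two trivalent vertices $u$ (joined to $p,q$) and $v$ (joined to $r,s$) and an edge $uv$, with no crossings. Flattening all crossings yields a planar trivalent graph $G$ (multiple edges allowed) embedded in $S^2$, and the set $M$ of new edges is a perfect matching; the embedding with $M$ is the perfect matching graph $\Gamma_M$. A perfect matching graph is an embedding in $S^2$ of a planar trivalent graph with a perfect matching $M=\{M_1,\dots,M_n\}$ (ordered). Resolution configurations: $D=(Z(D),A(D))$, $Z(D)$ a finite set of circles immersed in $S^2$ (union has only transverse double points), $A(D)$ a finite totally ordered set of disjoint embedded arcs meeting the circles exactly in their endpoints. Surgery $s_A(D)$ along $A$: in a small disk around $A$ meeting the circles in segments with ends $z,w$ and $x,y$ ($z,x$ on one side of $A$), replace them by strands $z$–$y$ and $x$–$w$ crossing once; arcs become $A(D)\setminus\{A\}$. An arc is an $\eta$-, $\Delta$-, or $m$-arc according as surgery changes the number of circles by $0,+1,-1$. Resolutions: for a matching edge $e=uv$, let $a,b$ be the other edges at $u$ and $c,d$ those at $v$, with $a,c$ on the same side of $e$. The $0$-resolution removes $u,v,e$,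 joins $a$–$c$ and $b$–$d$ by disjoint strands parallel to $e$, and places an arc joining them; the $1$-resolution joins $a$–$d$ and $b$–$c$ by strands crossing once, no arc. $D_{\Gamma_M}(v)$, $v\in\{0,1\}^n$, takes the $v_i$-resolution at $M_i$, arcs $A_i$ ($v_i=0$) ordered by $i$. Bad face: states $v,u$ differing exactly in coordinates $i\neq j$, $v_i=v_j=0$, $u_i=u_j=1$, such that for some ordering of $\{i,j\}$: $A_i$ is an $\eta$-arc of $D_{\Gamma_M}(v)$, $A_j$ is an $\eta$-arc of $s_{A_i}(D_{\Gamma_M}(v))$, $A_j$ is a $\Delta$-arc of $D_{\Gamma_M}(v)$, and $A_i$ is an $m$-arc of $s_{A_j}(D_{\Gamma_M}(v))$. $\mathscr G$ is the family of pairs $(G,M)$ such that for every perfect matching graph representing $(G,M)$ (every plane embedding, every ordering of $M$) the hypercube of states contains no bad face. *)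

theory Defs
  imports Main
begin

definition conn_classes :: "'a set \<Rightarrow> ('a \<Rightarrow> 'a \<Rightarrow> bool) \<Rightarrow> 'a set set" where
  "conn_classes S R =
     (\<lambda>x. {y. (\<lambda>a b. a \<in> S \<and> b \<in> S \<and> (R a b \<or> R b a))\<^sup>*\<^sup>* x y}) ` S"

definition nclasses :: "'a set \<Rightarrow> ('a \<Rightarrow> 'a \<Rightarrow> bool) \<Rightarrow> nat" where
  "nclasses S R = card (conn_classes S R)"

definition fpf_involution_on :: "'a set \<Rightarrow> ('a \<Rightarrow> 'a) \<Rightarrow> bool" where
  "fpf_involution_on S f \<longleftrightarrow> (\<forall>d\<in>S. f d \<in> S \<and> f d \<noteq> d \<and> f (f d) = d)"

text \<open>Combinatorial map (darts S, edge involution alpha, rotation sigma) has genus 0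
  on every connected component: V - E + F = 2 C (Euler); this is exactly
  the condition that the rotation system comes from an embedding in the 2-sphere.\<close>
definition genus0 :: "'a set \<Rightarrow> ('a \<Rightarrow> 'a) \<Rightarrow> ('a \<Rightarrow> 'a) \<Rightarrow> bool" where
  "genus0 S \<alpha> \<sigma> \<longleftrightarrow>
     int (nclasses S (\<lambda>a b. b = \<sigma> a)) + int (nclasses S (\<lambda>a b. b = \<sigma> (\<alpha> a)))
     = int (nclasses S (\<lambda>a b. b = \<alpha> a)) + 2 * int (nclasses S (\<lambda>a b. b = \<sigma> a \<or> b = \<alpha> a))"

text \<open>H: darts (half-edges), alpha: the other half of the edge, vx: vertex of a dart,
  M: the darts belonging to matching edges.\<close>
definition tri_pm_graph :: "'d set \<Rightarrow> ('d \<Rightarrow> 'd) \<Rightarrow> ('d \<Rightarrow> 'v) \<Rightarrow> 'd set \<Rightarrow> bool" where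
  "tri_pm_graph H \<alpha> vx M \<longleftrightarrow>
     finite H \<and> fpf_involution_on H \<alpha> \<and>
     (\<forall>d\<in>H. card {e\<in>H. vx e = vx d} = 3) \<and>
     M \<subseteq> H \<and> (\<forall>d\<in>H. (d \<in> M \<longleftrightarrow> \<alpha> d \<in> M)) \<and>
     (\<forall>d\<in>H. card {e\<in>M. vx e = vx d} = 1) \<and>
     (\<forall>d\<in>M. vx (\<alpha> d) \<noteq> vx d)"

text \<open>A plane embedding = rotation system (cyclic order sigma of the three darts at each
  vertex) of genus 0.\<close>
definition plane_embedding :: "'d set \<Rightarrow> ('d \<Rightarrow> 'd) \<Rightarrow> ('d \<Rightarrow> 'v) \<Rightarrow> ('d \<Rightarrow> 'd) \<Rightarrow> bool" where
  "plane_embedding H \<alpha> vx \<sigma> \<longleftrightarrow>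
     inj_on \<sigma> H \<and>
     (\<forall>d\<in>H. \<sigma> d \<in> H \<and> vx (\<sigma> d) = vx d \<and> \<sigma> d \<noteq> d \<and> \<sigma> (\<sigma> d) \<noteq> d) \<and>
     genus0 H \<alpha> \<sigma>"

text \<open>A state is given by a set T of matching darts; the matching edge of m is
  1-resolved iff m or alpha m lies in T, otherwise 0-resolved.\<close>
definition junction :: "'d set \<Rightarrow> ('d \<Rightarrow> 'd) \<Rightarrow> ('d \<Rightarrow> 'd) \<Rightarrow> 'd set \<Rightarrow> 'd \<Rightarrow> 'd \<Rightarrow> bool" where
  "junction M \<alpha> \<sigma> T a b \<longleftrightarrow>
     (\<exists>m\<in>M. if m \<in> T \<or> \<alpha> m \<in> T
            then (a = \<sigma> m \<and> b = \<sigma> (\<alpha> m)) \<or> (a = \<sigma> (\<sigma> m) \<and> b = \<sigma> (\<sigma> (\<alpha> m)))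
            else (a = \<sigma> m \<and> b = \<sigma> (\<sigma> (\<alpha> m))) \<or> (a = \<sigma> (\<sigma> m) \<and> b = \<sigma> (\<alpha> m)))"

text \<open>Number of circles of the resolution configuration of state T: the circles are
  traced on the non-matching darts, alternating along graph edges and resolution strands.\<close>
definition ncircles :: "'d set \<Rightarrow> ('d \<Rightarrow> 'd) \<Rightarrow> ('d \<Rightarrow> 'd) \<Rightarrow> 'd set \<Rightarrow> 'd set \<Rightarrow> nat" where
  "ncircles H \<alpha> \<sigma> M T = nclasses (H - M) (\<lambda>a b. b = \<alpha> a \<or> junction M \<alpha> \<sigma> T a b)"

text \<open>Bad face spanned by the (distinct, both 0-resolved in T) matching edges of mi and mj,
  with ordering (i,j): A_i eta-arc of D(v), A_j eta-arc of s_{A_i} D(v),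
  A_j Delta-arc of D(v), A_i m-arc of s_{A_j} D(v).  Surgery along A_k turns the
  0-resolution at k into the 1-resolution.\<close>
definition bad_face :: "'d set \<Rightarrow> ('d \<Rightarrow> 'd) \<Rightarrow> ('d \<Rightarrow> 'd) \<Rightarrow> 'd set \<Rightarrow> 'd set \<Rightarrow> 'd \<Rightarrow> 'd \<Rightarrow> bool" where
  "bad_face H \<alpha> \<sigma> M T mi mj \<longleftrightarrow>
     T \<subseteq> M \<and> mi \<in> M \<and> mj \<in> M \<and> mj \<noteq> mi \<and> mj \<noteq> \<alpha> mi \<and>
     mi \<notin> T \<and> \<alpha> mi \<notin> T \<and> mj \<notin> T \<and> \<alpha> mj \<notin> T \<and>
     (let c0 = int (ncircles H \<alpha> \<sigma> M T);
          ci = int (ncircles H \<alpha> \<sigma> M (insert mi T));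
          cj = int (ncircles H \<alpha> \<sigma> M (insert mj T));
          cij = int (ncircles H \<alpha> \<sigma> M (insert mi (insert mj T)))
      in ci = c0 \<and> cij = ci \<and> cj = c0 + 1 \<and> cij = cj - 1)"

definition no_bad_face :: "'d set \<Rightarrow> ('d \<Rightarrow> 'd) \<Rightarrow> ('d \<Rightarrow> 'd) \<Rightarrow> 'd set \<Rightarrow> bool" where
  "no_bad_face H \<alpha> \<sigma> M \<longleftrightarrow> (\<forall>T mi mj. \<not> bad_face H \<alpha> \<sigma> M T mi mj)"

definition in_script_G :: "'d set \<Rightarrow> ('d \<Rightarrow> 'd) \<Rightarrow> ('d \<Rightarrow> 'v) \<Rightarrow> 'd set \<Rightarrow> bool" where
  "in_script_G H \<alpha> vx M \<longleftrightarrow>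
     tri_pm_graph H \<alpha> vx M \<and> (\<forall>\<sigma>. plane_embedding H \<alpha> vx \<sigma> \<longrightarrow> no_bad_face H \<alpha> \<sigma> M)"

text \<open>Darts X at crossings, beta: edge involution, tau: rotation at crossings (4-cycles),
  strands go straight through (d and tau(tau d) on the same strand),
  out d: the end d is outgoing at its crossing.\<close>
definition oriented_diagram :: "'x set \<Rightarrow> ('x \<Rightarrow> 'x) \<Rightarrow> ('x \<Rightarrow> 'x) \<Rightarrow> ('x \<Rightarrow> bool) \<Rightarrow> bool" where
  "oriented_diagram X \<beta> \<tau> out \<longleftrightarrow>
     finite X \<and> fpf_involution_on X \<beta> \<and> inj_on \<tau> X \<and>
     (\<forall>d\<in>X. \<tau> d \<in> X \<and> \<tau> (\<tau> d) \<noteq> d \<and> \<tau> (\<tau> (\<tau> (\<tau> d))) = d) \<and>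
     genus0 X \<beta> \<tau> \<and>
     (\<forall>d\<in>X. out (\<beta> d) = (\<not> out d) \<and> out (\<tau> (\<tau> d)) = (\<not> out d))"

definition crossing :: "('x \<Rightarrow> 'x) \<Rightarrow> 'x \<Rightarrow> 'x set" where
  "crossing \<tau> d = range (\<lambda>n. (\<tau> ^^ n) d)"

definition flat_darts :: "'x set \<Rightarrow> ('x \<Rightarrow> 'x) \<Rightarrow> ('x + ('x set \<times> bool)) set" where
  "flat_darts X \<tau> = Inl ` X \<union> (\<lambda>(d, b). Inr (crossing \<tau> d, b)) ` (X \<times> UNIV)"

definition flat_M :: "'x set \<Rightarrow> ('x \<Rightarrow> 'x) \<Rightarrow> ('x + ('x set \<times> bool)) set" where
  "flat_M X \<tau> = (\<lambda>(d, b). Inr (crossing \<tau> d, b)) ` (X \<times> UNIV)"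

fun flat_alpha :: "('x \<Rightarrow> 'x) \<Rightarrow> ('x + ('x set \<times> bool)) \<Rightarrow> ('x + ('x set \<times> bool))" where
  "flat_alpha \<beta> (Inl d) = Inl (\<beta> d)"
| "flat_alpha \<beta> (Inr (c, b)) = Inr (c, \<not> b)"

text \<open>Vertex (c, False) is u (incoming ends), (c, True) is v (outgoing ends).\<close>
fun flat_vx :: "('x \<Rightarrow> 'x) \<Rightarrow> ('x \<Rightarrow> bool) \<Rightarrow> ('x + ('x set \<times> bool)) \<Rightarrow> ('x set \<times> bool)" where
  "flat_vx \<tau> out (Inl d) = (crossing \<tau> d, out d)"
| "flat_vx \<tau> out (Inr (c, b)) = (c, b)"

end

theory Submission
  imports Defs
begin

lemma rtranclp_sym:
  assumes "\<And>a b. R a b \<Longrightarrow> R b a" and "R\<^sup>*\<^sup>* x y"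
  shows "R\<^sup>*\<^sup>* y x"
  using assms(2)
proof induction
  case base then show ?case by simp
next
  case (step y z)
  then show ?case using assms(1) by (meson converse_rtranclp_into_rtranclp)
qed

lemma rtranclp_absorb:
  assumes "\<And>a b. P a b \<Longrightarrow> Q\<^sup>*\<^sup>* a b" and "P\<^sup>*\<^sup>* x y"
  shows "Q\<^sup>*\<^sup>* x y"
  using assms(2)
proof induction
  case base then show ?case by simp
next
  case (step y z)
  then show ?case using assms(1) by (meson rtranclp_trans)
qed

definition symr :: "'a set \<Rightarrow> ('a \<Rightarrow> 'a \<Rightarrow> bool) \<Rightarrow> 'a \<Rightarrow> 'a \<Rightarrow> bool" where
  "symr S R = (\<lambda>a b. a \<in> S \<and> b \<in> S \<and> (R a b \<or> R b a))"

lemma conn_classes_symr: "conn_classes S R = (\<lambda>x. {y. (symr S R)\<^sup>*\<^sup>* x y}) ` S"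
  unfolding conn_classes_def symr_def ..

lemma symr_sym: "symr S R a b \<Longrightarrow> symr S R b a"
  unfolding symr_def by auto

lemma symr_rt_sym: "(symr S R)\<^sup>*\<^sup>* a b \<Longrightarrow> (symr S R)\<^sup>*\<^sup>* b a"
  by (rule rtranclp_sym[OF symr_sym])

lemma nclasses_cong:
  assumes "\<And>a b. a \<in> S \<Longrightarrow> b \<in> S \<Longrightarrow> (R a b \<or> R b a) = (R' a b \<or> R' b a)"
  shows "nclasses S R = nclasses S R'"
proof -
  have "symr S R = symr S R'" using assms unfolding symr_def by (intro ext) blast
  then show ?thesis unfolding nclasses_def conn_classes_symr by simp
qed

lemma nclasses_eq_rt:
  assumes "(symr S R)\<^sup>*\<^sup>* = (symr S R')\<^sup>*\<^sup>*"
  shows "nclasses S R = nclasses S R'"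
  using assms unfolding nclasses_def conn_classes_symr by simp

lemma nclasses_less:
  assumes fin: "finite S"
    and mono: "\<And>a b. (symr S R)\<^sup>*\<^sup>* a b \<Longrightarrow> (symr S R')\<^sup>*\<^sup>* a b"
    and xy: "x \<in> S" "y \<in> S" "\<not> (symr S R)\<^sup>*\<^sup>* x y" "(symr S R')\<^sup>*\<^sup>* x y"
  shows "nclasses S R' < nclasses S R"
proof -
  define F where "F = (\<lambda>x. {y. (symr S R)\<^sup>*\<^sup>* x y})"
  define G where "G = (\<lambda>x. {y. (symr S R')\<^sup>*\<^sup>* x y})"
  define h where "h = (\<lambda>C. \<Union> (G ` C))"
  have GG: "G z = G w" if "(symr S R')\<^sup>*\<^sup>* w z" for z w
    unfolding G_def using that symr_rt_sym[of S R' w z] by (auto intro: rtranclp_trans symr_rt_sym)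
  have hF: "h (F w) = G w" for w
  proof
    show "h (F w) \<subseteq> G w" unfolding h_def F_def using GG mono by auto
    show "G w \<subseteq> h (F w)" unfolding h_def F_def by auto
  qed
  have img: "G ` S = h ` (F ` S)" using hF by (auto simp: image_image)
  have "\<not> inj_on h (F ` S)"
  proof
    assume "inj_on h (F ` S)"
    moreover have "h (F x) = h (F y)" using hF GG xy(4) by simp
    ultimately have "F x = F y" using xy by (auto dest: inj_onD)
    then have "y \<in> F x" unfolding F_def by auto
    then show False using xy(3) unfolding F_def by simp
  qed
  then have "card (h ` (F ` S)) \<noteq> card (F ` S)" using fin eq_card_imp_inj_on finite_imageI by blast
  moreover have "card (h ` (F ` S)) \<le> card (F ` S)" using fin card_image_le finite_imageI by blast
  ultimately show ?thesis unfolding nclasses_def conn_classes_symr F_def[symmetric] G_def[symmetric] img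
    by simp
qed

context
  fixes S :: "'a set" and \<alpha> j0 :: "'a \<Rightarrow> 'a" and col :: "'a \<Rightarrow> bool" and p q r s :: 'a
  assumes fin: "finite S"
    and alpha: "\<And>a. a \<in> S \<Longrightarrow> \<alpha> a \<in> S \<and> \<alpha> (\<alpha> a) = a \<and> col (\<alpha> a) \<noteq> col a"
    and pqrs: "p \<in> S" "q \<in> S" "r \<in> S" "s \<in> S" "p \<noteq> q" "r \<noteq> s"
    and cols: "\<not> col p" "\<not> col q" "col r" "col s"
    and j0: "\<And>a. a \<in> S - {p,q,r,s} \<Longrightarrow> j0 a \<in> S - {p,q,r,s} \<and> j0 (j0 a) = a \<and> col (j0 a) \<noteq> col a"
begin

definition "R0 = (\<lambda>a b. b = \<alpha> a \<or> (a \<in> S - {p,q,r,s} \<and> b = j0 a))"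
definition "succ a = (if a = p \<or> a = q then a else if col a then \<alpha> a else j0 a)"

lemma E1:
  assumes "y \<in> S" "z \<in> S" "R0 y z"
  shows "(z = succ y \<and> y \<notin> {p,q}) \<or> (y = succ z \<and> z \<notin> {p,q})"
proof -
  consider "z = \<alpha> y" | "y \<in> S - {p,q,r,s}" "z = j0 y" using assms(3) unfolding R0_def by blast
  then show ?thesis
  proof cases
    case 1
    then show ?thesis using assms alpha[of y] cols unfolding succ_def by (cases "col y") auto
  next
    case 2
    then show ?thesis using assms j0[of y] cols unfolding succ_def by (cases "col y") auto
  qed
qed

lemma E2:
  assumes "z1 \<in> S - {p,q}" "z2 \<in> S - {p,q}" "succ z1 = succ z2"
  shows "z1 = z2"
proof -
  have a1: "\<not> col z1 \<Longrightarrow> z1 \<in> S - {p,q,r,s}" using assms cols by auto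
  have a2: "\<not> col z2 \<Longrightarrow> z2 \<in> S - {p,q,r,s}" using assms cols by auto
  have s1: "succ z1 = (if col z1 then \<alpha> z1 else j0 z1)" using assms unfolding succ_def by auto
  have s2: "succ z2 = (if col z2 then \<alpha> z2 else j0 z2)" using assms unfolding succ_def by auto
  show ?thesis
  proof (cases "col z1"; cases "col z2")
    assume "col z1" "col z2" then show ?thesis using s1 s2 assms alpha[of z1] alpha[of z2] by auto
  next
    assume "col z1" "\<not> col z2" then show ?thesis using s1 s2 assms alpha[of z1] j0[OF a2] by auto
  next
    assume "\<not> col z1" "col z2" then show ?thesis using s1 s2 assms alpha[of z2] j0[OF a1] by auto
  next
    assume "\<not> col z1" "\<not> col z2" then show ?thesis using s1 s2 assms j0[OF a1] j0[OF a2] by (metis)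
  qed
qed

lemma E3:
  assumes "z \<in> S - {p,q}"
  shows "succ z \<noteq> r \<and> succ z \<noteq> s"
proof (cases "col z")
  case True
  then show ?thesis using assms alpha[of z] cols unfolding succ_def by auto
next
  case False
  then have "z \<in> S - {p,q,r,s}" using assms cols by auto
  then show ?thesis using False assms j0[of z] unfolding succ_def by auto
qed

lemma succ_S: "a \<in> S \<Longrightarrow> succ a \<in> S"
  using alpha[of a] j0[of a] cols unfolding succ_def
  by (cases "col a") auto

lemma succ_pow_S: "(succ ^^ k) r \<in> S"
  by (induction k) (auto simp: pqrs succ_S)

lemma back_step:
  assumes "(succ ^^ k) r = y" "y = succ z" "z \<in> S - {p,q}"
  shows "\<exists>k. (succ ^^ k) r = z"
  using assms
proof (induction k arbitrary: y)
  case 0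
  then show ?case using E3[of z] by auto
next
  case (Suc k)
  define c where "c = (succ ^^ k) r"
  have c: "c \<in> S" using succ_pow_S c_def by simp
  have yc: "y = succ c" using Suc.prems(1) c_def by simp
  show ?case
  proof (cases "c \<in> {p,q}")
    case True
    then have "succ c = c" unfolding succ_def by auto
    then show ?thesis using Suc.IH[of c] Suc.prems yc c_def by simp
  next
    case False
    then have "z = c" using E2[of z c] c yc Suc.prems by auto
    then show ?thesis using c_def by blast
  qed
qed

lemma path_r: "(symr S R0)\<^sup>*\<^sup>* r y \<Longrightarrow> \<exists>k. (succ ^^ k) r = y"
proof (induction rule: rtranclp_induct)
  case base
  then show ?case by (metis funpow_0)
next
  case (step y z)
  then obtain k where k: "(succ ^^ k) r = y" by blast
  from step(2) have yz: "y \<in> S" "z \<in> S" "R0 y z \<or> R0 z y" unfolding symr_def by auto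
  then consider "z = succ y" | "y = succ z" "z \<in> S - {p,q}"
    using E1[of y z] E1[of z y] by auto
  then show ?case
  proof cases
    case 1
    then show ?thesis using k by (metis funpow.simps(2) o_apply)
  next
    case 2
    then show ?thesis using back_step[OF k] by blast
  qed
qed

lemma not_rs: "\<not> (symr S R0)\<^sup>*\<^sup>* r s"
proof
  assume "(symr S R0)\<^sup>*\<^sup>* r s"
  then obtain k where k: "(succ ^^ k) r = s" using path_r by blast
  show False
  proof (cases k)
    case 0 then show ?thesis using k pqrs by simp
  next
    case (Suc k')
    define c where "c = (succ ^^ k') r"
    have c: "c \<in> S" "succ c = s" using succ_pow_S c_def k Suc by auto
    show False
    proof (cases "c \<in> {p,q}")
      case True
      then show False using c cols unfolding succ_def by auto
    next
      case False
      then show False using E3[of c] c by auto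
    qed
  qed
qed

lemma balance:
  assumes x: "x \<in> S" and C: "C = {y. (symr S R0)\<^sup>*\<^sup>* x y}" and rs: "r \<in> C \<or> s \<in> C"
  shows "p \<in> C \<or> q \<in> C"
proof -
  have CS: "C \<subseteq> S"
  proof
    fix y assume "y \<in> C"
    then have "(symr S R0)\<^sup>*\<^sup>* x y" using C by simp
    then show "y \<in> S" using x by (induction rule: rtranclp_induct) (auto simp: symr_def)
  qed
  then have finC: "finite C" using fin finite_subset by blast
  have Ca: "\<alpha> y \<in> C" if "y \<in> C" for y
  proof -
    have "symr S R0 y (\<alpha> y)" using that CS alpha[of y] unfolding symr_def R0_def by auto
    then show ?thesis using that C by (auto intro: rtranclp.rtrancl_into_rtrancl)
  qed
  have Cj: "j0 y \<in> C" if "y \<in> C - {p,q,r,s}" for y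
  proof -
    have "symr S R0 y (j0 y)" using that CS j0[of y] unfolding symr_def R0_def by auto
    then show ?thesis using that C by (auto intro: rtranclp.rtrancl_into_rtrancl)
  qed
  have b1: "bij_betw \<alpha> (C \<inter> {a. col a}) (C \<inter> {a. \<not> col a})"
    by (rule bij_betw_byWitness[where f'=\<alpha>]) (use CS alpha Ca in auto)
  have b2: "bij_betw j0 ((C - {p,q,r,s}) \<inter> {a. col a}) ((C - {p,q,r,s}) \<inter> {a. \<not> col a})"
    by (rule bij_betw_byWitness[where f'=j0]) (use CS j0 Cj in auto)
  have u1: "C \<inter> {a. col a} = ((C - {p,q,r,s}) \<inter> {a. col a}) \<union> (C \<inter> {r,s})"
    using cols by auto
  have u0: "C \<inter> {a. \<not> col a} = ((C - {p,q,r,s}) \<inter> {a. \<not> col a}) \<union> (C \<inter> {p,q})"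
    using cols by auto
  have "card (C \<inter> {a. col a}) = card ((C - {p,q,r,s}) \<inter> {a. col a}) + card (C \<inter> {r,s})"
    unfolding u1 by (rule card_Un_disjoint) (use finC in auto)
  moreover have "card (C \<inter> {a. \<not> col a}) = card ((C - {p,q,r,s}) \<inter> {a. \<not> col a}) + card (C \<inter> {p,q})"
    unfolding u0 by (rule card_Un_disjoint) (use finC in auto)
  ultimately have "card (C \<inter> {r,s}) = card (C \<inter> {p,q})"
    using bij_betw_same_card[OF b1] bij_betw_same_card[OF b2] by simp
  moreover have "card (C \<inter> {r,s}) > 0" using rs by (auto simp: card_gt_0_iff)
  ultimately have "C \<inter> {p,q} \<noteq> {}" by (metis card.empty less_irrefl)
  then show ?thesis by blast
qed

definition "RT = (\<lambda>a b. R0 a b \<or> (a = p \<and> b = r) \<or> (a = q \<and> b = s))"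
definition "RT' = (\<lambda>a b. R0 a b \<or> (a = p \<and> b = s) \<or> (a = q \<and> b = r))"

lemma core: "nclasses S RT \<noteq> nclasses S RT'"
proof -
  let ?c = "(symr S R0)\<^sup>*\<^sup>*"
  have sym: "?c a b \<Longrightarrow> ?c b a" for a b by (rule symr_rt_sym)
  have r1: "?c r p \<or> ?c r q" using balance[OF pqrs(3) refl] by auto
  have s1: "?c s p \<or> ?c s q" using balance[OF pqrs(4) refl] by auto
  have nrs: "\<not> ?c r s" by (rule not_rs)
  have mT: "(symr S R0)\<^sup>*\<^sup>* a b \<Longrightarrow> (symr S RT)\<^sup>*\<^sup>* a b" for a b
    by (rule rtranclp_absorb[where P="symr S R0"]) (auto simp: symr_def RT_def)
  have mT': "(symr S R0)\<^sup>*\<^sup>* a b \<Longrightarrow> (symr S RT')\<^sup>*\<^sup>* a b" for a b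
    by (rule rtranclp_absorb[where P="symr S R0"]) (auto simp: symr_def RT'_def)
  consider "?c r p" "?c s q" | "?c r q" "?c s p"
  proof -
    have "\<not> (?c r p \<and> ?c s p)" using nrs sym rtranclp_trans by metis
    moreover have "\<not> (?c r q \<and> ?c s q)" using nrs sym rtranclp_trans by metis
    ultimately show "(?c r p \<Longrightarrow> ?c s q \<Longrightarrow> thesis) \<Longrightarrow> (?c r q \<Longrightarrow> ?c s p \<Longrightarrow> thesis) \<Longrightarrow> thesis"
      using r1 s1 by blast
  qed
  then show ?thesis
  proof cases
    case 1
    have eq: "(symr S RT)\<^sup>*\<^sup>* = ?c"
    proof (intro ext iffI)
      have st: "?c a b" if "symr S RT a b" for a b
      proof -
        have "symr S R0 a b \<or> (a = p \<and> b = r) \<or> (a = q \<and> b = s) \<or> (a = r \<and> b = p) \<or> (a = s \<and> b = q)"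
          using that unfolding symr_def RT_def by blast
        then show ?thesis proof (elim disjE) qed (use 1 sym in \<open>auto intro: r_into_rtranclp\<close>)
      qed
      fix a b assume "(symr S RT)\<^sup>*\<^sup>* a b"
      then show "?c a b" by (rule rtranclp_absorb[OF st, rotated])
    qed (rule mT)
    have "nclasses S RT' < nclasses S R0"
    proof (rule nclasses_less[OF fin _ pqrs(3) pqrs(4) nrs])
      show "(symr S RT')\<^sup>*\<^sup>* r s"
      proof -
        have "(symr S RT')\<^sup>*\<^sup>* r p" using mT' 1 by blast
        moreover have "symr S RT' p s" using pqrs unfolding symr_def RT'_def by auto
        ultimately show ?thesis by (auto intro: rtranclp.rtrancl_into_rtrancl)
      qed
    qed (rule mT')
    moreover have "nclasses S RT = nclasses S R0" using eq by (rule nclasses_eq_rt)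
    ultimately show ?thesis by simp
  next
    case 2
    have eq: "(symr S RT')\<^sup>*\<^sup>* = ?c"
    proof (intro ext iffI)
      have st: "?c a b" if "symr S RT' a b" for a b
      proof -
        have "symr S R0 a b \<or> (a = p \<and> b = s) \<or> (a = q \<and> b = r) \<or> (a = s \<and> b = p) \<or> (a = r \<and> b = q)"
          using that unfolding symr_def RT'_def by blast
        then show ?thesis proof (elim disjE) qed (use 2 sym in \<open>auto intro: r_into_rtranclp\<close>)
      qed
      fix a b assume "(symr S RT')\<^sup>*\<^sup>* a b"
      then show "?c a b" by (rule rtranclp_absorb[OF st, rotated])
    qed (rule mT')
    have "nclasses S RT < nclasses S R0"
    proof (rule nclasses_less[OF fin _ pqrs(3) pqrs(4) nrs])
      show "(symr S RT)\<^sup>*\<^sup>* r s"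
      proof -
        have "(symr S RT)\<^sup>*\<^sup>* r q" using mT 2 by blast
        moreover have "symr S RT q s" using pqrs unfolding symr_def RT_def by auto
        ultimately show ?thesis by (auto intro: rtranclp.rtrancl_into_rtrancl)
      qed
    qed (rule mT)
    moreover have "nclasses S RT' = nclasses S R0" using eq by (rule nclasses_eq_rt)
    ultimately show ?thesis by simp
  qed
qed

lemma core':
  "nclasses S (\<lambda>a b. b = \<alpha> a \<or> (a \<in> S - {p,q,r,s} \<and> b = j0 a) \<or> (a = p \<and> b = r) \<or> (a = q \<and> b = s))
       \<noteq> nclasses S (\<lambda>a b. b = \<alpha> a \<or> (a \<in> S - {p,q,r,s} \<and> b = j0 a) \<or> (a = p \<and> b = s) \<or> (a = q \<and> b = r))"
  using core unfolding RT_def RT'_def R0_def by (simp add: disj_assoc)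

end

lemma core_gen:
  fixes col :: "'a \<Rightarrow> bool"
  assumes fin: "finite S"
    and alpha: "\<And>a. a \<in> S \<Longrightarrow> \<alpha> a \<in> S \<and> \<alpha> (\<alpha> a) = a \<and> col (\<alpha> a) \<noteq> col a"
    and pqrs: "p \<in> S" "q \<in> S" "r \<in> S" "s \<in> S" "p \<noteq> q" "r \<noteq> s"
    and cols: "col p = col q" "col r = col s" "col p \<noteq> col r"
    and j0: "\<And>a. a \<in> S - {p,q,r,s} \<Longrightarrow> j0 a \<in> S - {p,q,r,s} \<and> j0 (j0 a) = a \<and> col (j0 a) \<noteq> col a"
  shows "nclasses S (\<lambda>a b. b = \<alpha> a \<or> (a \<in> S - {p,q,r,s} \<and> b = j0 a) \<or> (a = p \<and> b = r) \<or> (a = q \<and> b = s))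
       \<noteq> nclasses S (\<lambda>a b. b = \<alpha> a \<or> (a \<in> S - {p,q,r,s} \<and> b = j0 a) \<or> (a = p \<and> b = s) \<or> (a = q \<and> b = r))"
proof (cases "col r")
  case True
  have c: "\<not> col p" "\<not> col q" "col r" "col s" using True cols by auto
  show ?thesis
    using core'[where S=S and \<alpha>=\<alpha> and col=col and p=p and q=q and r=r and s=s, OF fin alpha pqrs c j0] by simp
next
  case False
  have c: "\<not> col r" "\<not> col s" "col p" "col q" using False cols by auto
  have e: "{r,s,p,q} = {p,q,r,s}" by auto
  have j0': "\<And>a. a \<in> S - {r,s,p,q} \<Longrightarrow> j0 a \<in> S - {r,s,p,q} \<and> j0 (j0 a) = a \<and> col (j0 a) \<noteq> col a"
    using j0 unfolding e by blast
  have X: "nclasses S (\<lambda>a b. b = \<alpha> a \<or> (a \<in> S - {r,s,p,q} \<and> b = j0 a) \<or> (a = r \<and> b = p) \<or> (a = s \<and> b = q))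
       \<noteq> nclasses S (\<lambda>a b. b = \<alpha> a \<or> (a \<in> S - {r,s,p,q} \<and> b = j0 a) \<or> (a = r \<and> b = q) \<or> (a = s \<and> b = p))"
    using core'[where S=S and \<alpha>=\<alpha> and col=col and p=r and q=s and r=p and s=q, OF fin alpha pqrs(3,4,1,2,6,5) c j0'] by simp
  have 1: "nclasses S (\<lambda>a b. b = \<alpha> a \<or> (a \<in> S - {r,s,p,q} \<and> b = j0 a) \<or> (a = r \<and> b = p) \<or> (a = s \<and> b = q))
     = nclasses S (\<lambda>a b. b = \<alpha> a \<or> (a \<in> S - {p,q,r,s} \<and> b = j0 a) \<or> (a = p \<and> b = r) \<or> (a = q \<and> b = s))"
    by (rule nclasses_cong) (unfold e, blast)
  have 2: "nclasses S (\<lambda>a b. b = \<alpha> a \<or> (a \<in> S - {r,s,p,q} \<and> b = j0 a) \<or> (a = r \<and> b = q) \<or> (a = s \<and> b = p))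
     = nclasses S (\<lambda>a b. b = \<alpha> a \<or> (a \<in> S - {p,q,r,s} \<and> b = j0 a) \<or> (a = p \<and> b = s) \<or> (a = q \<and> b = r))"
    by (rule nclasses_cong) (unfold e, blast)
  show ?thesis using X 1 2 by simp
qed

definition matof :: "'d set \<Rightarrow> ('d \<Rightarrow> 'v) \<Rightarrow> 'd \<Rightarrow> 'd" where
  "matof M vx a = (SOME m. m \<in> M \<and> vx m = vx a)"

definition jT :: "('d \<Rightarrow> 'd) \<Rightarrow> ('d \<Rightarrow> 'd) \<Rightarrow> ('d \<Rightarrow> 'd) \<Rightarrow> 'd set \<Rightarrow> 'd \<Rightarrow> 'd" where
  "jT \<alpha> \<sigma> mt T a = (if mt a \<in> T \<or> \<alpha> (mt a) \<in> T
      then (if a = \<sigma> (mt a) then \<sigma> (\<alpha> (mt a)) else \<sigma> (\<sigma> (\<alpha> (mt a))))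
      else (if a = \<sigma> (mt a) then \<sigma> (\<sigma> (\<alpha> (mt a))) else \<sigma> (\<alpha> (mt a))))"

context
  fixes H :: "'d set" and \<alpha> \<sigma> :: "'d \<Rightarrow> 'd" and vx :: "'d \<Rightarrow> 'c \<times> bool" and M :: "'d set"
  assumes tri: "tri_pm_graph H \<alpha> vx M"
    and bip: "\<And>d. d \<in> H \<Longrightarrow> snd (vx (\<alpha> d)) \<noteq> snd (vx d)"
    and pe: "plane_embedding H \<alpha> vx \<sigma>"
begin

lemma finH: "finite H" using tri unfolding tri_pm_graph_def by blast
lemma aH: "d \<in> H \<Longrightarrow> \<alpha> d \<in> H \<and> \<alpha> d \<noteq> d \<and> \<alpha> (\<alpha> d) = d"
  using tri unfolding tri_pm_graph_def fpf_involution_on_def by blast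
lemma MH: "M \<subseteq> H" using tri unfolding tri_pm_graph_def by blast
lemma aM: "d \<in> H \<Longrightarrow> d \<in> M \<longleftrightarrow> \<alpha> d \<in> M" using tri unfolding tri_pm_graph_def by blast
lemma c3: "d \<in> H \<Longrightarrow> card {e\<in>H. vx e = vx d} = 3" using tri unfolding tri_pm_graph_def by blast
lemma c1: "d \<in> H \<Longrightarrow> card {e\<in>M. vx e = vx d} = 1" using tri unfolding tri_pm_graph_def by blast
lemma sH: "d \<in> H \<Longrightarrow> \<sigma> d \<in> H \<and> vx (\<sigma> d) = vx d \<and> \<sigma> d \<noteq> d \<and> \<sigma> (\<sigma> d) \<noteq> d"
  using pe unfolding plane_embedding_def by blast
lemma sinj: "inj_on \<sigma> H" using pe unfolding plane_embedding_def by blast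

lemma M_uniq:
  assumes "m1 \<in> M" "m2 \<in> M" "vx m1 = vx m2"
  shows "m1 = m2"
proof -
  have "m1 \<in> H" using assms MH by blast
  from c1[OF this] obtain x where x: "{e\<in>M. vx e = vx m1} = {x}" by (rule card_1_singletonE)
  have "m1 \<in> {e\<in>M. vx e = vx m1}" "m2 \<in> {e\<in>M. vx e = vx m1}" using assms by auto
  then show ?thesis unfolding x by simp
qed

lemma mat:
  assumes "d \<in> H"
  shows "matof M vx d \<in> M \<and> vx (matof M vx d) = vx d"
proof -
  have "{e\<in>M. vx e = vx d} \<noteq> {}" using c1[OF assms] by (metis card.empty zero_neq_one)
  then have "\<exists>m. m \<in> M \<and> vx m = vx d" by blast
  then show ?thesis unfolding matof_def by (rule someI_ex)
qed

lemma mat_eq: "d \<in> H \<Longrightarrow> m \<in> M \<Longrightarrow> vx m = vx d \<Longrightarrow> matof M vx d = m"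
  using mat M_uniq by metis

lemma sig_m:
  assumes "m \<in> M"
  shows "\<sigma> m \<in> H - M \<and> \<sigma> (\<sigma> m) \<in> H - M \<and> \<sigma> (\<sigma> m) \<noteq> \<sigma> m \<and> vx (\<sigma> m) = vx m \<and> vx (\<sigma> (\<sigma> m)) = vx m \<and> \<sigma> m \<noteq> m \<and> \<sigma> (\<sigma> m) \<noteq> m"
proof -
  have mH: "m \<in> H" using assms MH by blast
  have 1: "\<sigma> m \<in> H" "vx (\<sigma> m) = vx m" "\<sigma> m \<noteq> m" "\<sigma> (\<sigma> m) \<noteq> m" using sH[OF mH] by auto
  have 2: "\<sigma> (\<sigma> m) \<in> H" "vx (\<sigma> (\<sigma> m)) = vx m" using sH[OF 1(1)] 1 by auto
  have 3: "\<sigma> (\<sigma> m) \<noteq> \<sigma> m" using sinj 1 mH by (metis inj_onD)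
  have 4: "\<sigma> m \<notin> M" using M_uniq[OF _ assms] 1 by metis
  have 5: "\<sigma> (\<sigma> m) \<notin> M" using M_uniq[OF _ assms] 1 2 by metis
  show ?thesis using 1 2 3 4 5 by blast
qed

lemma sig_cover:
  assumes a: "a \<in> H - M"
  shows "a = \<sigma> (matof M vx a) \<or> a = \<sigma> (\<sigma> (matof M vx a))"
proof -
  define m where "m = matof M vx a"
  have m: "m \<in> M" "vx m = vx a" using mat[of a] a m_def by auto
  define V where "V = {e\<in>H. vx e = vx a}"
  have fV: "finite V" using finH V_def by simp
  have sub: "{m, \<sigma> m, \<sigma> (\<sigma> m)} \<subseteq> V" using sig_m[OF m(1)] m MH unfolding V_def by auto
  have "card {m, \<sigma> m, \<sigma> (\<sigma> m)} = 3" using sig_m[OF m(1)] by auto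
  moreover have "card V = 3" using c3[of a] a V_def by auto
  ultimately have "{m, \<sigma> m, \<sigma> (\<sigma> m)} = V" using card_subset_eq[OF fV sub] by simp
  moreover have "a \<in> V" "a \<noteq> m" using a m V_def by auto
  ultimately show ?thesis unfolding m_def by blast
qed

lemma junction_iff:
  assumes a: "a \<in> H - M"
  shows "(junction M \<alpha> \<sigma> T a b \<or> junction M \<alpha> \<sigma> T b a) \<longleftrightarrow> b = jT \<alpha> \<sigma> (matof M vx) T a"
proof
  assume "junction M \<alpha> \<sigma> T a b \<or> junction M \<alpha> \<sigma> T b a"
  then show "b = jT \<alpha> \<sigma> (matof M vx) T a"
  proof
    assume "junction M \<alpha> \<sigma> T a b"
    then obtain m where m: "m \<in> M" and J: "if m \<in> T \<or> \<alpha> m \<in> T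
            then (a = \<sigma> m \<and> b = \<sigma> (\<alpha> m)) \<or> (a = \<sigma> (\<sigma> m) \<and> b = \<sigma> (\<sigma> (\<alpha> m)))
            else (a = \<sigma> m \<and> b = \<sigma> (\<sigma> (\<alpha> m))) \<or> (a = \<sigma> (\<sigma> m) \<and> b = \<sigma> (\<alpha> m))"
      unfolding junction_def by blast
    have sm: "\<sigma> (\<sigma> m) \<noteq> \<sigma> m" "vx (\<sigma> m) = vx m" "vx (\<sigma> (\<sigma> m)) = vx m" using sig_m[OF m] by auto
    have am: "a = \<sigma> m \<or> a = \<sigma> (\<sigma> m)" using J by (auto split: if_splits)
    then have "matof M vx a = m" using mat_eq[of a m] a m sm by auto
    then show ?thesis using J sm unfolding jT_def by (auto split: if_splits)
  next
    assume "junction M \<alpha> \<sigma> T b a"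
    then obtain m where m: "m \<in> M" and J: "if m \<in> T \<or> \<alpha> m \<in> T
            then (b = \<sigma> m \<and> a = \<sigma> (\<alpha> m)) \<or> (b = \<sigma> (\<sigma> m) \<and> a = \<sigma> (\<sigma> (\<alpha> m)))
            else (b = \<sigma> m \<and> a = \<sigma> (\<sigma> (\<alpha> m))) \<or> (b = \<sigma> (\<sigma> m) \<and> a = \<sigma> (\<alpha> m))"
      unfolding junction_def by blast
    have mH: "m \<in> H" using m MH by blast
    have m': "\<alpha> m \<in> M" "\<alpha> (\<alpha> m) = m" using aM[OF mH] aH[OF mH] m by auto
    have sm: "\<sigma> (\<sigma> (\<alpha> m)) \<noteq> \<sigma> (\<alpha> m)" "vx (\<sigma> (\<alpha> m)) = vx (\<alpha> m)" "vx (\<sigma> (\<sigma> (\<alpha> m))) = vx (\<alpha> m)"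
      using sig_m[OF m'(1)] by auto
    have am: "a = \<sigma> (\<alpha> m) \<or> a = \<sigma> (\<sigma> (\<alpha> m))" using J by (auto split: if_splits)
    then have "matof M vx a = \<alpha> m" using mat_eq[of a "\<alpha> m"] a m' sm by auto
    then show ?thesis using J sm m' unfolding jT_def by (auto split: if_splits)
  qed
next
  assume b: "b = jT \<alpha> \<sigma> (matof M vx) T a"
  define m where "m = matof M vx a"
  have m: "m \<in> M" using mat[of a] a m_def by auto
  have sm: "\<sigma> (\<sigma> m) \<noteq> \<sigma> m" using sig_m[OF m] by auto
  have "a = \<sigma> m \<or> a = \<sigma> (\<sigma> m)" using sig_cover[OF a] m_def by simp
  then have "junction M \<alpha> \<sigma> T a b"
    unfolding junction_def using m b sm unfolding jT_def m_def[symmetric]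
    by (intro bexI[of _ m]) (auto split: if_splits)
  then show "junction M \<alpha> \<sigma> T a b \<or> junction M \<alpha> \<sigma> T b a" ..
qed

end

lemma prop_aux: "(jab \<or> jba \<longleftrightarrow> P) \<Longrightarrow> (P \<longleftrightarrow> Xa \<or> Xb) \<Longrightarrow> (A' \<longleftrightarrow> A) \<Longrightarrow>
   ((A \<or> jab) \<or> (A' \<or> jba)) = ((A \<or> Xa) \<or> (A' \<or> Xb))"
  by blast

lemma pair_equiv:
  assumes ab: "a \<in> S" "b \<in> S"
    and JJ: "\<And>x. x \<in> S \<Longrightarrow> J x \<in> S \<and> J (J x) = x"
    and Jv: "J p = r" "J q = s" "J r = p" "J s = q"
  shows "(b = J a) \<longleftrightarrow> (((a \<in> S - {p,q,r,s} \<and> b = J a) \<or> (a = p \<and> b = r) \<or> (a = q \<and> b = s)) \<or>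
             ((b \<in> S - {p,q,r,s} \<and> a = J b) \<or> (b = p \<and> a = r) \<or> (b = q \<and> a = s)))"
proof
  assume b: "b = J a"
  show "((a \<in> S - {p,q,r,s} \<and> b = J a) \<or> (a = p \<and> b = r) \<or> (a = q \<and> b = s)) \<or>
             ((b \<in> S - {p,q,r,s} \<and> a = J b) \<or> (b = p \<and> a = r) \<or> (b = q \<and> a = s))"
  proof (cases "a \<in> {p,q,r,s}")
    case True
    then consider "a = p" | "a = q" | "a = r" | "a = s" by blast
    then show ?thesis using b Jv by cases auto
  next
    case False
    then show ?thesis using b ab by blast
  qed
next
  assume "((a \<in> S - {p,q,r,s} \<and> b = J a) \<or> (a = p \<and> b = r) \<or> (a = q \<and> b = s)) \<or>
             ((b \<in> S - {p,q,r,s} \<and> a = J b) \<or> (b = p \<and> a = r) \<or> (b = q \<and> a = s))"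
  then show "b = J a"
  proof (elim disjE conjE)
    assume "b \<in> S - {p,q,r,s}" "a = J b"
    then show ?thesis using JJ[of b] by auto
  qed (use Jv in auto)
qed

context
  fixes H :: "'d set" and \<alpha> \<sigma> :: "'d \<Rightarrow> 'd" and vx :: "'d \<Rightarrow> 'c \<times> bool" and M :: "'d set"
  assumes tri: "tri_pm_graph H \<alpha> vx M"
    and bip: "\<And>d. d \<in> H \<Longrightarrow> snd (vx (\<alpha> d)) \<noteq> snd (vx d)"
    and pe: "plane_embedding H \<alpha> vx \<sigma>"
begin

lemma jT_props:
  assumes a: "a \<in> H - M"
  shows "jT \<alpha> \<sigma> (matof M vx) T a \<in> H - M \<and>
         matof M vx (jT \<alpha> \<sigma> (matof M vx) T a) = \<alpha> (matof M vx a) \<and>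
         jT \<alpha> \<sigma> (matof M vx) T (jT \<alpha> \<sigma> (matof M vx) T a) = a \<and>
         snd (vx (jT \<alpha> \<sigma> (matof M vx) T a)) \<noteq> snd (vx a)"
proof -
  define m where "m = matof M vx a"
  have m: "m \<in> M" "vx m = vx a" using mat[OF tri bip pe, of a] a m_def by auto
  have mH: "m \<in> H" using m MH[OF tri bip pe] by blast
  have m': "\<alpha> m \<in> M" using aM[OF tri bip pe mH] m by auto
  have sm: "\<sigma> (\<alpha> m) \<in> H - M" "\<sigma> (\<sigma> (\<alpha> m)) \<in> H - M" "vx (\<sigma> (\<alpha> m)) = vx (\<alpha> m)" "vx (\<sigma> (\<sigma> (\<alpha> m))) = vx (\<alpha> m)"
    using sig_m[OF tri bip pe m'] by auto
  have j: "jT \<alpha> \<sigma> (matof M vx) T a = \<sigma> (\<alpha> m) \<or> jT \<alpha> \<sigma> (matof M vx) T a = \<sigma> (\<sigma> (\<alpha> m))"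
    unfolding jT_def m_def by auto
  have jH: "jT \<alpha> \<sigma> (matof M vx) T a \<in> H - M" using j sm by auto
  have v: "vx (jT \<alpha> \<sigma> (matof M vx) T a) = vx (\<alpha> m)" using j sm by auto
  have 2: "matof M vx (jT \<alpha> \<sigma> (matof M vx) T a) = \<alpha> m"
    using mat_eq[OF tri bip pe, of _ "\<alpha> m"] jH v m' by auto
  have 3: "jT \<alpha> \<sigma> (matof M vx) T (jT \<alpha> \<sigma> (matof M vx) T a) = a"
  proof -
    let ?b = "jT \<alpha> \<sigma> (matof M vx) T a"
    have "junction M \<alpha> \<sigma> T a ?b \<or> junction M \<alpha> \<sigma> T ?b a" using junction_iff[OF tri bip pe a] by simp
    moreover have "(junction M \<alpha> \<sigma> T ?b a \<or> junction M \<alpha> \<sigma> T a ?b) \<longleftrightarrow> a = jT \<alpha> \<sigma> (matof M vx) T ?b"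
      by (rule junction_iff[OF tri bip pe jH])
    ultimately show ?thesis by (metis)
  qed
  have 4: "snd (vx (jT \<alpha> \<sigma> (matof M vx) T a)) \<noteq> snd (vx a)"
    using v bip[OF mH] m by simp
  show ?thesis using jH 2 3 4 m_def by blast
qed

lemma flip_ne:
  assumes mi: "mi \<in> M" "mi \<notin> T" "\<alpha> mi \<notin> T"
  shows "ncircles H \<alpha> \<sigma> M (insert mi T) \<noteq> ncircles H \<alpha> \<sigma> M T"
proof -
  define S where "S = H - M"
  define mt where "mt = matof M vx"
  define J where "J = jT \<alpha> \<sigma> mt T"
  define J' where "J' = jT \<alpha> \<sigma> mt (insert mi T)"
  define p where "p = \<sigma> mi"
  define q where "q = \<sigma> (\<sigma> mi)"
  define r where "r = \<sigma> (\<sigma> (\<alpha> mi))"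
  define s where "s = \<sigma> (\<alpha> mi)"
  define col where "col = (\<lambda>a. snd (vx a))"
  have miH: "mi \<in> H" using mi MH[OF tri bip pe] by blast
  have ami: "\<alpha> mi \<in> M" "\<alpha> (\<alpha> mi) = mi" "\<alpha> mi \<noteq> mi" "col (\<alpha> mi) \<noteq> col mi"
    using aM[OF tri bip pe miH] aH[OF tri bip pe miH] bip[OF miH] mi col_def by auto
  have s1: "p \<in> S" "q \<in> S" "q \<noteq> p" "vx p = vx mi" "vx q = vx mi"
    using sig_m[OF tri bip pe mi(1)] unfolding p_def q_def S_def by auto
  have s2: "s \<in> S" "r \<in> S" "r \<noteq> s" "vx s = vx (\<alpha> mi)" "vx r = vx (\<alpha> mi)"
    using sig_m[OF tri bip pe ami(1)] unfolding r_def s_def S_def by auto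
  have mtv: "mt p = mi" "mt q = mi" "mt r = \<alpha> mi" "mt s = \<alpha> mi"
    using mat_eq[OF tri bip pe] s1 s2 mi ami unfolding mt_def S_def by auto
  have Echar: "a \<in> {p,q,r,s} \<longleftrightarrow> mt a = mi \<or> mt a = \<alpha> mi" if "a \<in> S" for a
    using sig_cover[OF tri bip pe, of a] that mtv unfolding S_def mt_def p_def q_def r_def s_def by auto
  have Jv: "J p = r" "J q = s" "J r = p" "J s = q"
    using mtv mi ami s1 s2 unfolding J_def jT_def p_def q_def r_def s_def by auto
  have J'v: "J' p = s" "J' q = r" "J' r = q" "J' s = p"
    using mtv mi ami s1 s2 unfolding J'_def jT_def p_def q_def r_def s_def by auto
  have JJ: "a \<in> S \<Longrightarrow> J a \<in> S \<and> mt (J a) = \<alpha> (mt a) \<and> J (J a) = a \<and> col (J a) \<noteq> col a" for a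
    using jT_props[of a T] unfolding J_def mt_def S_def col_def by blast
  have JJ': "a \<in> S \<Longrightarrow> J' a \<in> S \<and> J' (J' a) = a" for a
    using jT_props[of a "insert mi T"] unfolding J'_def mt_def S_def col_def by blast
  have mtS: "a \<in> S \<Longrightarrow> mt a \<in> M \<and> mt a \<in> H \<and> \<alpha> (\<alpha> (mt a)) = mt a" for a
    using mat[OF tri bip pe, of a] aH[OF tri bip pe, of "mt a"] MH[OF tri bip pe] unfolding S_def mt_def by auto
  have JSE: "a \<in> S - {p,q,r,s} \<Longrightarrow> J a \<in> S - {p,q,r,s} \<and> J (J a) = a \<and> col (J a) \<noteq> col a" for a
  proof -
    assume a: "a \<in> S - {p,q,r,s}"
    then have "mt a \<noteq> mi" "mt a \<noteq> \<alpha> mi" using Echar[of a] by auto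
    moreover have aS: "a \<in> S" using a by blast
    ultimately have "mt (J a) \<noteq> mi" "mt (J a) \<noteq> \<alpha> mi" using JJ[OF aS] mtS[OF aS] ami by (metis, metis)
    then show ?thesis using JJ[of a] a Echar[of "J a"] by auto
  qed
  have J'J: "a \<in> S - {p,q,r,s} \<Longrightarrow> J' a = J a" for a
  proof -
    assume a: "a \<in> S - {p,q,r,s}"
    then have 1: "mt a \<noteq> mi" "mt a \<noteq> \<alpha> mi" using Echar[of a] by auto
    moreover have aS: "a \<in> S" using a by blast
    ultimately have "\<alpha> (mt a) \<noteq> mi" using mtS[OF aS] by metis
    then show ?thesis using 1 unfolding J_def J'_def jT_def by simp
  qed
  have alpha: "a \<in> S \<Longrightarrow> \<alpha> a \<in> S \<and> \<alpha> (\<alpha> a) = a \<and> col (\<alpha> a) \<noteq> col a" for a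
    using aH[OF tri bip pe, of a] aM[OF tri bip pe, of a] bip[of a] unfolding S_def col_def by auto
  have fin: "finite S" using finH[OF tri bip pe] S_def by simp
  have cols: "col p = col q" "col r = col s" "col p \<noteq> col r"
    using s1 s2 ami unfolding col_def by auto
  have main: "nclasses S (\<lambda>a b. b = \<alpha> a \<or> (a \<in> S - {p,q,r,s} \<and> b = J a) \<or> (a = p \<and> b = r) \<or> (a = q \<and> b = s))
       \<noteq> nclasses S (\<lambda>a b. b = \<alpha> a \<or> (a \<in> S - {p,q,r,s} \<and> b = J a) \<or> (a = p \<and> b = s) \<or> (a = q \<and> b = r))"
    by (rule core_gen[OF fin alpha s1(1,2) s2(2,1) s1(3)[symmetric] s2(3) cols JSE])
  have junc: "a \<in> S \<Longrightarrow> (junction M \<alpha> \<sigma> U a b \<or> junction M \<alpha> \<sigma> U b a) \<longleftrightarrow> b = jT \<alpha> \<sigma> mt U a" for a b U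
    using junction_iff[OF tri bip pe, of a U b] unfolding S_def mt_def by simp
  have eq1: "ncircles H \<alpha> \<sigma> M T = nclasses S (\<lambda>a b. b = \<alpha> a \<or> (a \<in> S - {p,q,r,s} \<and> b = J a) \<or> (a = p \<and> b = r) \<or> (a = q \<and> b = s))"
    unfolding ncircles_def S_def[symmetric]
  proof (rule nclasses_cong)
    fix a b assume ab: "a \<in> S" "b \<in> S"
    have "(b = J a) \<longleftrightarrow> (((a \<in> S - {p,q,r,s} \<and> b = J a) \<or> (a = p \<and> b = r) \<or> (a = q \<and> b = s)) \<or>
             ((b \<in> S - {p,q,r,s} \<and> a = J b) \<or> (b = p \<and> a = r) \<or> (b = q \<and> a = s)))"
      by (rule pair_equiv[OF ab]) (use JJ Jv in auto)
    moreover have "a = \<alpha> b \<longleftrightarrow> b = \<alpha> a" using alpha ab by auto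
    ultimately show "((b = \<alpha> a \<or> junction M \<alpha> \<sigma> T a b) \<or> (a = \<alpha> b \<or> junction M \<alpha> \<sigma> T b a)) =
       ((b = \<alpha> a \<or> (a \<in> S - {p,q,r,s} \<and> b = J a) \<or> (a = p \<and> b = r) \<or> (a = q \<and> b = s)) \<or>
        (a = \<alpha> b \<or> (b \<in> S - {p,q,r,s} \<and> a = J b) \<or> (b = p \<and> a = r) \<or> (b = q \<and> a = s)))"
      by (rule prop_aux[OF junc[OF ab(1), of T b, folded J_def]])
  qed
  have eq2: "ncircles H \<alpha> \<sigma> M (insert mi T) = nclasses S (\<lambda>a b. b = \<alpha> a \<or> (a \<in> S - {p,q,r,s} \<and> b = J a) \<or> (a = p \<and> b = s) \<or> (a = q \<and> b = r))"
    unfolding ncircles_def S_def[symmetric]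
  proof (rule nclasses_cong)
    fix a b assume ab: "a \<in> S" "b \<in> S"
    have "(b = J' a) \<longleftrightarrow> (((a \<in> S - {p,q,r,s} \<and> b = J a) \<or> (a = p \<and> b = s) \<or> (a = q \<and> b = r)) \<or>
             ((b \<in> S - {p,q,r,s} \<and> a = J b) \<or> (b = p \<and> a = s) \<or> (b = q \<and> a = r)))"
    proof -
      have e: "{p,q,s,r} = {p,q,r,s}" by blast
      have c1: "(a \<in> S - {p,q,r,s} \<and> b = J' a) \<longleftrightarrow> (a \<in> S - {p,q,r,s} \<and> b = J a)" using J'J[of a] by auto
      have c2: "(b \<in> S - {p,q,r,s} \<and> a = J' b) \<longleftrightarrow> (b \<in> S - {p,q,r,s} \<and> a = J b)" using J'J[of b] by auto
      have "(b = J' a) \<longleftrightarrow> (((a \<in> S - {p,q,s,r} \<and> b = J' a) \<or> (a = p \<and> b = s) \<or> (a = q \<and> b = r)) \<or>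
             ((b \<in> S - {p,q,s,r} \<and> a = J' b) \<or> (b = p \<and> a = s) \<or> (b = q \<and> a = r)))"
        by (rule pair_equiv[OF ab JJ' J'v(1,2,4,3)])
      then show ?thesis unfolding e c1 c2 .
    qed
    moreover have "a = \<alpha> b \<longleftrightarrow> b = \<alpha> a" using alpha ab by auto
    ultimately show "((b = \<alpha> a \<or> junction M \<alpha> \<sigma> (insert mi T) a b) \<or> (a = \<alpha> b \<or> junction M \<alpha> \<sigma> (insert mi T) b a)) =
       ((b = \<alpha> a \<or> (a \<in> S - {p,q,r,s} \<and> b = J a) \<or> (a = p \<and> b = s) \<or> (a = q \<and> b = r)) \<or>
        (a = \<alpha> b \<or> (b \<in> S - {p,q,r,s} \<and> a = J b) \<or> (b = p \<and> a = s) \<or> (b = q \<and> a = r)))"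
      by (rule prop_aux[OF junc[OF ab(1), of "insert mi T" b, folded J'_def]])
  qed
  show ?thesis using main eq1 eq2 by simp
qed

lemma no_bad: "no_bad_face H \<alpha> \<sigma> M"
  unfolding no_bad_face_def bad_face_def Let_def using flip_ne by fastforce

end

lemma in_G_gen:
  fixes vx :: "'d \<Rightarrow> 'c \<times> bool"
  assumes tri: "tri_pm_graph H \<alpha> vx M" and bip: "\<And>d. d \<in> H \<Longrightarrow> snd (vx (\<alpha> d)) \<noteq> snd (vx d)"
  shows "in_script_G H \<alpha> vx M"
  unfolding in_script_G_def using tri no_bad[OF tri bip] by blast

context
  fixes X :: "'x set" and \<beta> \<tau> :: "'x \<Rightarrow> 'x" and out :: "'x \<Rightarrow> bool"
  assumes od: "oriented_diagram X \<beta> \<tau> out"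
begin

lemma finX: "finite X" using od unfolding oriented_diagram_def by blast
lemma bX: "d \<in> X \<Longrightarrow> \<beta> d \<in> X \<and> \<beta> d \<noteq> d \<and> \<beta> (\<beta> d) = d"
  using od unfolding oriented_diagram_def fpf_involution_on_def by blast
lemma tX: "d \<in> X \<Longrightarrow> \<tau> d \<in> X \<and> \<tau> (\<tau> d) \<noteq> d \<and> \<tau> (\<tau> (\<tau> (\<tau> d))) = d"
  using od unfolding oriented_diagram_def by blast
lemma oX: "d \<in> X \<Longrightarrow> out (\<beta> d) = (\<not> out d) \<and> out (\<tau> (\<tau> d)) = (\<not> out d)"
  using od unfolding oriented_diagram_def by blast

lemma t1: "d \<in> X \<Longrightarrow> \<tau> d \<noteq> d"
  using tX[of d] by auto

lemma dist4:
  assumes d: "d \<in> X"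
  shows "\<tau> d \<noteq> d" "\<tau> (\<tau> d) \<noteq> d" "\<tau> (\<tau> (\<tau> d)) \<noteq> d" "\<tau> (\<tau> d) \<noteq> \<tau> d"
        "\<tau> (\<tau> (\<tau> d)) \<noteq> \<tau> d" "\<tau> (\<tau> (\<tau> d)) \<noteq> \<tau> (\<tau> d)"
proof -
  have X1: "\<tau> d \<in> X" "\<tau> (\<tau> d) \<in> X" using tX d by auto
  show "\<tau> d \<noteq> d" using t1 d by blast
  show "\<tau> (\<tau> d) \<noteq> d" using tX d by blast
  show "\<tau> (\<tau> (\<tau> d)) \<noteq> d" using tX[OF d] t1[OF d] by metis
  show "\<tau> (\<tau> d) \<noteq> \<tau> d" using t1 X1 by blast
  show "\<tau> (\<tau> (\<tau> d)) \<noteq> \<tau> d" using tX X1 by blast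
  show "\<tau> (\<tau> (\<tau> d)) \<noteq> \<tau> (\<tau> d)" using t1 X1 by blast
qed

lemma cr: assumes d: "d \<in> X"
  shows "crossing \<tau> d = {d, \<tau> d, \<tau> (\<tau> d), \<tau> (\<tau> (\<tau> d))}"
proof
  show "crossing \<tau> d \<subseteq> {d, \<tau> d, \<tau> (\<tau> d), \<tau> (\<tau> (\<tau> d))}"
  proof
    fix e assume "e \<in> crossing \<tau> d"
    then obtain n where e: "e = (\<tau> ^^ n) d" unfolding crossing_def by blast
    have "(\<tau> ^^ n) d \<in> {d, \<tau> d, \<tau> (\<tau> d), \<tau> (\<tau> (\<tau> d))}"
      by (induction n) (use tX[OF d] in auto)
    then show "e \<in> {d, \<tau> d, \<tau> (\<tau> d), \<tau> (\<tau> (\<tau> d))}" using e by simp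
  qed
  show "{d, \<tau> d, \<tau> (\<tau> d), \<tau> (\<tau> (\<tau> d))} \<subseteq> crossing \<tau> d"
  proof -
    have "d = (\<tau> ^^ 0) d" "\<tau> d = (\<tau> ^^ Suc 0) d" "\<tau> (\<tau> d) = (\<tau> ^^ Suc (Suc 0)) d"
      "\<tau> (\<tau> (\<tau> d)) = (\<tau> ^^ Suc (Suc (Suc 0))) d" by simp_all
    then show ?thesis unfolding crossing_def by (metis empty_subsetI insert_subset rangeI)
  qed
qed

lemma cr_tau: "d \<in> X \<Longrightarrow> crossing \<tau> (\<tau> d) = crossing \<tau> d"
  using cr[of d] cr[of "\<tau> d"] tX[of d] by auto

lemma cr_mem: assumes d: "d \<in> X" and e: "e \<in> crossing \<tau> d"
  shows "crossing \<tau> e = crossing \<tau> d"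
proof -
  have X1: "\<tau> d \<in> X" "\<tau> (\<tau> d) \<in> X" using tX d by auto
  have "e \<in> {d, \<tau> d, \<tau> (\<tau> d), \<tau> (\<tau> (\<tau> d))}" using cr[OF d] e by simp
  then show ?thesis using cr_tau[OF d] cr_tau[OF X1(1)] cr_tau[OF X1(2)] by auto
qed

lemma cr_self: "d \<in> X \<Longrightarrow> d \<in> crossing \<tau> d"
  using cr by auto

lemma cr_sub: "d \<in> X \<Longrightarrow> crossing \<tau> d \<subseteq> X"
  using cr[of d] tX[of d] tX[of "\<tau> d"] tX[of "\<tau> (\<tau> d)"] by auto

lemma cr_iff: "d \<in> X \<Longrightarrow> e \<in> X \<Longrightarrow> crossing \<tau> e = crossing \<tau> d \<longleftrightarrow> e \<in> crossing \<tau> d"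
  using cr_mem cr_self by metis

abbreviation "HH \<equiv> flat_darts X \<tau>"
abbreviation "MM \<equiv> flat_M X \<tau>"
abbreviation "AA \<equiv> flat_alpha \<beta>"
abbreviation "VV \<equiv> flat_vx \<tau> out"

lemma HH_iff: "e \<in> HH \<longleftrightarrow> (\<exists>x\<in>X. e = Inl x) \<or> (\<exists>x\<in>X. \<exists>b. e = Inr (crossing \<tau> x, b))"
  unfolding flat_darts_def by auto

lemma MM_iff: "e \<in> MM \<longleftrightarrow> (\<exists>x\<in>X. \<exists>b. e = Inr (crossing \<tau> x, b))"
  unfolding flat_M_def by auto

lemma pair2:
  assumes d: "d \<in> X"
  shows "\<exists>x1 x2. x1 \<noteq> x2 \<and> {x \<in> crossing \<tau> d. out x = b} = {x1, x2}"
proof -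
  have X1: "\<tau> d \<in> X" using tX d by auto
  have o1: "out (\<tau> (\<tau> d)) = (\<not> out d)" "out (\<tau> (\<tau> (\<tau> d))) = (\<not> out (\<tau> d))" using oX d X1 by auto
  define x1 where "x1 = (if out d = b then d else \<tau> (\<tau> d))"
  define x2 where "x2 = (if out (\<tau> d) = b then \<tau> d else \<tau> (\<tau> (\<tau> d)))"
  have "x1 \<noteq> x2" using dist4[OF d] unfolding x1_def x2_def by auto
  moreover have "{x \<in> crossing \<tau> d. out x = b} = {x1, x2}"
    unfolding cr[OF d] x1_def x2_def using o1 by auto
  ultimately show ?thesis by blast
qed

lemma vert:
  assumes d: "d \<in> X"
  shows "card {e \<in> HH. VV e = (crossing \<tau> d, b)} = 3"
proof -
  obtain x1 x2 where x: "x1 \<noteq> x2" "{x \<in> crossing \<tau> d. out x = b} = {x1, x2}" using pair2[OF d] by blast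
  have "{e \<in> HH. VV e = (crossing \<tau> d, b)} = {Inr (crossing \<tau> d, b), Inl x1, Inl x2}"
  proof (rule set_eqI)
    fix e
    show "e \<in> {e \<in> HH. VV e = (crossing \<tau> d, b)} \<longleftrightarrow> e \<in> {Inr (crossing \<tau> d, b), Inl x1, Inl x2}"
    proof (cases e)
      case (Inl y)
      have "Inl y \<in> HH \<and> VV (Inl y) = (crossing \<tau> d, b) \<longleftrightarrow> y \<in> {x \<in> crossing \<tau> d. out x = b}"
        using HH_iff[of "Inl y"] cr_iff[OF d, of y] cr_sub[OF d] by auto
      then show ?thesis using Inl x(2) by auto
    next
      case (Inr c)
      then show ?thesis using HH_iff[of e] d by (cases c) auto
    qed
  qed
  then show ?thesis using x(1) by simp
qed

lemma tri_flat: "tri_pm_graph HH AA VV MM"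
  unfolding tri_pm_graph_def
proof (intro conjI ballI)
  show "finite HH" using finX unfolding flat_darts_def by simp
  show "fpf_involution_on HH AA"
    unfolding fpf_involution_on_def
  proof
    fix e assume "e \<in> HH"
    then show "AA e \<in> HH \<and> AA e \<noteq> e \<and> AA (AA e) = e"
      unfolding HH_iff using bX by auto
  qed
  show "MM \<subseteq> HH" unfolding flat_M_def flat_darts_def by auto
next
  fix e assume e: "e \<in> HH"
  then consider x where "x \<in> X" "e = Inl x" | x b where "x \<in> X" "e = Inr (crossing \<tau> x, b)"
    unfolding HH_iff by blast
  then obtain x b where xb: "x \<in> X" "VV e = (crossing \<tau> x, b)"
    by cases auto
  show "card {e' \<in> HH. VV e' = VV e} = 3" using vert[OF xb(1)] xb(2) by simp
  show "e \<in> MM \<longleftrightarrow> AA e \<in> MM" using e unfolding HH_iff MM_iff by auto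
  have "{e' \<in> MM. VV e' = (crossing \<tau> x, b)} = {Inr (crossing \<tau> x, b)}"
    unfolding MM_iff using xb(1) by auto
  then show "card {e' \<in> MM. VV e' = VV e} = 1" using xb(2) by simp
next
  fix e assume "e \<in> MM"
  then show "VV (AA e) \<noteq> VV e" unfolding MM_iff by auto
qed

lemma bip_flat: "e \<in> HH \<Longrightarrow> snd (VV (AA e)) \<noteq> snd (VV e)"
  unfolding HH_iff using oX by auto

end

theorem mainTheorem11:
  fixes X :: "'x set" and \<beta> \<tau> :: "'x \<Rightarrow> 'x" and out :: "'x \<Rightarrow> bool"
  assumes "oriented_diagram X \<beta> \<tau> out"
  shows "in_script_G (flat_darts X \<tau>) (flat_alpha \<beta>) (flat_vx \<tau> out) (flat_M X \<tau>)"
  by (rule in_G_gen[OF tri_flat[OF assms] bip_flat[OF assms]])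

end
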